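(* Let $d\ge2$. For $R>0$ and $r>0$, $$F_d(R,r)\ll(1+r)\,\kappa_d(R),$$ where $F_d(R,r)$ is the maximal number of points of $\mathbb{Z}^d$ in a spherical cap of size $r$ on the sphere $\{x\in\mathbb{R}^d:|x|=R\}$, and $\kappa_d(R)$ is the maximal number of points of $\mathbb{Z}^d$ in the intersection of this sphere with a hyperplane.
   Context: A spherical cap of size $r$ on the sphere of radius $R$ is the intersection of the sphere with a ball of radius $\approx r$ centered at a point of the sphere. The implied constant is absolute. *)

theory Defs
  imports "HOL-Analysis.Analysis"
begin

definition lattice_pts :: "(real ^ 'n) set" where
  "lattice_pts = {x. \<forall>i. x $ i \<in> \<int>}"

definition sphere_lattice :: "real \<Rightarrow> (real ^ 'n) set" where
  "sphere_lattice R = lattice_pts \<inter> sphere 0 R"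

text \<open>F_d(R,r): maximal number of lattice points in a cap of size r, i.e. the sphere
  intersected with a closed ball of radius r centred at a point of the sphere.\<close>
definition cap_count :: "('n::finite) itself \<Rightarrow> real \<Rightarrow> real \<Rightarrow> nat" where
  "cap_count _ R r = Sup {card (sphere_lattice R \<inter> cball (x :: real ^ 'n) r) | x. x \<in> sphere 0 R}"

definition hyperplane_count :: "('n::finite) itself \<Rightarrow> real \<Rightarrow> nat" where
  "hyperplane_count _ R = Sup {card (sphere_lattice R \<inter> {x :: real ^ 'n. a \<bullet> x = b}) | a b. a \<noteq> 0}"

end

theory Submission
  imports Defs
begin

lemma finite_sphere_lattice: "finite (sphere_lattice R :: (real ^ 'n::finite) set)"
proof -
  define M where "M = ceiling R"
  define f where "f = (\<lambda>x::real^'n. (\<lambda>i. floor (x $ i)))"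
  have inj: "inj_on f (sphere_lattice R)"
  proof (rule inj_onI)
    fix x y assume x: "x \<in> sphere_lattice R" and y: "y \<in> sphere_lattice R" and e: "f x = f y"
    show "x = y"
    proof (subst vec_eq_iff, rule allI)
      fix i
      have "x $ i \<in> \<int>" "y $ i \<in> \<int>" using x y by (auto simp: sphere_lattice_def lattice_pts_def)
      then have "x $ i = of_int (floor (x $ i))" "y $ i = of_int (floor (y $ i))" by auto
      moreover have "floor (x $ i) = floor (y $ i)" using e unfolding f_def by meson
      ultimately show "x $ i = y $ i" by simp
    qed
  qed
  have sub: "f ` sphere_lattice R \<subseteq> PiE UNIV (\<lambda>_. {-M..M})"
  proof
    fix z assume "z \<in> f ` sphere_lattice R"
    then obtain x where x: "x \<in> sphere_lattice R" and z: "z = f x" by auto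
    have "\<And>i. \<bar>x $ i\<bar> \<le> R" using x component_le_norm_cart[of x]
      by (auto simp: sphere_lattice_def)
    have "\<And>i. floor (x $ i) \<in> {-M..M}"
    proof -
      fix i
      have a: "-R \<le> x $ i" "x $ i \<le> R" using \<open>\<And>i. \<bar>x $ i\<bar> \<le> R\<close>[of i] by auto
      have "floor (x $ i) \<le> M" unfolding M_def using a(2)
        by (meson floor_le_ceiling floor_mono order_trans)
      moreover have "- M \<le> floor (x $ i)" unfolding M_def using a(1) floor_mono[OF a(1)]
        by (simp add: floor_minus)
      ultimately show "floor (x $ i) \<in> {-M..M}" by simp
    qed
    then show "z \<in> PiE UNIV (\<lambda>_. {-M..M})" unfolding z f_def by auto
  qed
  have "finite (PiE (UNIV::'n set) (\<lambda>_. {-M..M}))" by (rule finite_PiE) auto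
  then have "finite (f ` sphere_lattice R)" using sub finite_subset by blast
  then show ?thesis using inj finite_image_iff by blast
qed

lemma slice_le:
  fixes k :: real and i :: "'n::finite"
  shows "card (sphere_lattice R \<inter> {y :: real^'n. y $ i = k}) \<le> hyperplane_count TYPE('n) R"
proof -
  let ?X = "{card (sphere_lattice R \<inter> {x :: real ^ 'n. a \<bullet> x = b}) | a b. a \<noteq> 0}"
  have eq: "{y :: real^'n. y $ i = k} = {x. axis i 1 \<bullet> x = k}" by (simp add: inner_axis')
  have mem: "card (sphere_lattice R \<inter> {y :: real^'n. y $ i = k}) \<in> ?X"
    unfolding eq by (rule CollectI, rule exI[of _ "axis i 1"], rule exI[of _ k]) (simp add: axis_eq_0_iff)
  have "bdd_above ?X"
    by (rule bdd_aboveI[of _ "card (sphere_lattice R :: (real^'n) set)"])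
       (auto intro!: card_mono finite_sphere_lattice)
  then show ?thesis unfolding hyperplane_count_def using mem by (rule cSup_upper[rotated])
qed

lemma cap_le:
  fixes x :: "real^'n::finite" and i :: "'n"
  assumes "r > 0"
  shows "real (card (sphere_lattice R \<inter> cball x r)) \<le> (2*r+1) * real (hyperplane_count TYPE('n) R)"
proof -
  define K where "K = {ceiling (x$i - r) .. floor (x$i + r)}"
  define S where "S = (sphere_lattice R :: (real^'n) set)"
  have sub: "S \<inter> cball x r \<subseteq> (\<Union>k\<in>K. S \<inter> {y. y $ i = of_int k})"
  proof
    fix y assume y: "y \<in> S \<inter> cball x r"
    then have "y $ i \<in> \<int>" by (auto simp: S_def sphere_lattice_def lattice_pts_def)
    then obtain k where k: "y $ i = of_int k" by (auto elim: Ints_cases)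
    have "\<bar>y $ i - x $ i\<bar> \<le> r" using y component_le_norm_cart[of "y - x" i]
      by (auto simp: dist_norm norm_minus_commute)
    then have "k \<in> K" unfolding K_def using k by (auto simp: ceiling_le_iff le_floor_iff)
    then show "y \<in> (\<Union>k\<in>K. S \<inter> {y. y $ i = of_int k})" using y k by auto
  qed
  have "card (S \<inter> cball x r) \<le> card (\<Union>k\<in>K. S \<inter> {y. y $ i = of_int k})"
    by (rule card_mono[OF _ sub]) (auto simp: K_def S_def finite_sphere_lattice)
  also have "\<dots> \<le> (\<Sum>k\<in>K. card (S \<inter> {y. y $ i = of_int k}))"
    by (rule card_UN_le) (simp add: K_def)
  also have "\<dots> \<le> (\<Sum>k\<in>K. hyperplane_count TYPE('n) R)"
    by (rule sum_mono) (simp add: S_def slice_le)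
  also have "\<dots> = card K * hyperplane_count TYPE('n) R" by simp
  finally have 1: "real (card (S \<inter> cball x r)) \<le> real (card K) * real (hyperplane_count TYPE('n) R)"
    by (metis of_nat_le_iff of_nat_mult)
  have "card K = nat (floor (x$i + r) + 1 - ceiling (x$i - r))" by (simp add: K_def)
  moreover have "real_of_int (floor (x$i + r) + 1 - ceiling (x$i - r)) \<le> 2*r+1"
    using of_int_floor_le[of "x$i + r"] le_of_int_ceiling[of "x$i - r"] by linarith
  ultimately have "real (card K) \<le> 2*r+1" using assms by linarith
  then have "real (card K) * real (hyperplane_count TYPE('n) R) \<le> (2*r+1) * real (hyperplane_count TYPE('n) R)"
    by (rule mult_right_mono) simp
  with 1 show ?thesis by (simp add: S_def)
qed

theorem lemma2p2:
  assumes "CARD('n::finite) \<ge> 2"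
  shows "\<exists>C>0. \<forall>R>0. \<forall>r>0.
    real (cap_count TYPE('n) R r) \<le> C * (1 + r) * real (hyperplane_count TYPE('n) R)"
proof (intro exI[of _ 2] conjI allI impI)
  fix R r :: real assume "R > 0" "r > 0"
  let ?X = "{card (sphere_lattice R \<inter> cball (x :: real ^ 'n) r) | x. x \<in> sphere 0 R}"
  define B where "B = (2*r+1) * real (hyperplane_count TYPE('n) R)"
  have all: "\<forall>c\<in>?X. c \<le> nat (floor B)"
  proof
    fix c assume "c \<in> ?X"
    then obtain x :: "real^'n" where c: "c = card (sphere_lattice R \<inter> cball x r)" by auto
    obtain i :: 'n where True by simp
    have "real c \<le> B" unfolding c B_def by (rule cap_le[OF \<open>r > 0\<close>])
    then show "c \<le> nat (floor B)" by linarith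
  qed
  have "cap_count TYPE('n) R r \<le> nat (floor B)"
  proof (cases "?X = {}")
    case True then show ?thesis unfolding cap_count_def by (simp only: True Sup_nat_empty)
  next
    case False then show ?thesis unfolding cap_count_def using all by (intro cSup_least) auto
  qed
  moreover have "B \<ge> 0" unfolding B_def using \<open>r > 0\<close> by simp
  ultimately have "real (cap_count TYPE('n) R r) \<le> B" by linarith
  also have "B \<le> 2 * (1 + r) * real (hyperplane_count TYPE('n) R)"
    unfolding B_def by (rule mult_right_mono) auto
  finally show "real (cap_count TYPE('n) R r) \<le> 2 * (1 + r) * real (hyperplane_count TYPE('n) R)" .
qed simp

end
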